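(* The set $\mathcal{A}$ is a convex subset of $\mathbb{P}(\mathbb{Z}^+)$. For any $F_1,F_2\in\mathcal{A}$ and $G\in\mathbb{P}(\mathbb{Z}^+)$, one has $F_1*F_2\in\mathcal{A}$ and $\sum_{k\ge0}F_1(k)G^{(k)}\in\mathcal{A}$.
   Context: $\mathbb{P}(\mathbb{Z}^+)$ is the set of functions $F:\mathbb{Z}\to[0,1]$ with $\sum_kF(k)=1$ and $F(k)=0$ for $k<0$. $*$ denotes convolution $(F_1*F_2)(m)=\sum_kF_1(k)F_2(m-k)$, $G^{(k)}$ is the $k$-th convolution power with $G^{(0)}=\delta_0$ (point mass at $0$). $\mathcal{A}=\{F\in\mathbb{P}(\mathbb{Z}^+):\sup_{n\in\mathbb{N}}n\sum_{k}|F^{(n)}(k)-F^{(n+1)}(k)|<\infty\}$. *)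

theory Defs
  imports "HOL-Analysis.Analysis"
begin

definition PZ :: "(int \<Rightarrow> real) set" where
  "PZ = {F. (\<forall>k. 0 \<le> F k \<and> F k \<le> 1) \<and> (F has_sum 1) UNIV \<and> (\<forall>k<0. F k = 0)}"

definition conv :: "(int \<Rightarrow> real) \<Rightarrow> (int \<Rightarrow> real) \<Rightarrow> (int \<Rightarrow> real)" (infixl "\<star>" 70) where
  "conv F1 F2 = (\<lambda>m. \<Sum>\<^sub>\<infinity>k\<in>UNIV. F1 k * F2 (m - k))"

definition delta0 :: "int \<Rightarrow> real" where
  "delta0 = (\<lambda>k. if k = 0 then 1 else 0)"

primrec conv_pow :: "(int \<Rightarrow> real) \<Rightarrow> nat \<Rightarrow> (int \<Rightarrow> real)" where
  "conv_pow G 0 = delta0"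
| "conv_pow G (Suc n) = G \<star> conv_pow G n"

definition classA :: "(int \<Rightarrow> real) set" where
  "classA = {F \<in> PZ. \<exists>C::real. \<forall>n::nat.
      real n * (\<Sum>\<^sub>\<infinity>k\<in>UNIV. \<bar>conv_pow F n k - conv_pow F (Suc n) k\<bar>) \<le> C}"

end

theory Submission
  imports Defs "HOL-Computational_Algebra.Formal_Power_Series"
begin


definition L1 :: "real fps \<Rightarrow> bool" where "L1 a \<longleftrightarrow> summable (\<lambda>n. \<bar>(fps_nth a n)\<bar>)"
definition nrm :: "real fps \<Rightarrow> real" where "nrm a = (\<Sum>n. \<bar>(fps_nth a n)\<bar>)"

lemma nrm_nonneg: "L1 a \<Longrightarrow> nrm a \<ge> 0"
  unfolding nrm_def L1_def by (rule suminf_nonneg) auto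

lemma L1_add: "L1 a \<Longrightarrow> L1 b \<Longrightarrow> L1 (a + b)"
  unfolding L1_def by (rule summable_comparison_test[where g="\<lambda>n. \<bar>(fps_nth a n)\<bar> + \<bar>(fps_nth b n)\<bar>"]) (auto intro: summable_add)

lemma nrm_add: assumes "L1 a" "L1 b" shows "nrm (a + b) \<le> nrm a + nrm b"
proof -
  have "nrm (a + b) \<le> (\<Sum>n. \<bar>fps_nth a n\<bar> + \<bar>fps_nth b n\<bar>)"
    unfolding nrm_def using L1_add[OF assms] assms unfolding L1_def
    by (intro suminf_le summable_add) (auto intro: abs_triangle_ineq)
  also have "\<dots> = nrm a + nrm b" unfolding nrm_def using assms unfolding L1_def
    by (rule suminf_add[symmetric])
  finally show ?thesis .
qed

lemma L1_uminus: "L1 a \<Longrightarrow> L1 (- a)"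
  unfolding L1_def by simp

lemma nrm_uminus: "nrm (- a) = nrm a"
  unfolding nrm_def by simp

lemma L1_diff: "L1 a \<Longrightarrow> L1 b \<Longrightarrow> L1 (a - b)"
  using L1_add[of a "-b"] L1_uminus[of b] by simp

lemma nrm_diff: "L1 a \<Longrightarrow> L1 b \<Longrightarrow> nrm (a - b) \<le> nrm a + nrm b"
  using nrm_add[of a "-b"] L1_uminus[of b] nrm_uminus[of b] by simp

lemma L1_cmult: "L1 a \<Longrightarrow> L1 (fps_const c * a)"
  unfolding L1_def by (simp add: abs_mult summable_mult)

lemma nrm_cmult: "L1 a \<Longrightarrow> nrm (fps_const c * a) = \<bar>c\<bar> * nrm a"
  unfolding nrm_def L1_def by (simp add: abs_mult suminf_mult)

lemma mult_abs_le: fixes a b :: "real fps" shows "\<bar>(fps_nth (a * b) n)\<bar> \<le> (\<Sum>i\<le>n. \<bar>(fps_nth a i)\<bar> * \<bar>(fps_nth b (n - i))\<bar>)"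
proof -
  have "\<bar>\<Sum>i\<le>n. fps_nth a i * fps_nth b (n - i)\<bar> \<le> (\<Sum>i\<le>n. \<bar>fps_nth a i * fps_nth b (n - i)\<bar>)"
    by (rule sum_abs)
  then show ?thesis by (simp add: fps_mult_nth atLeast0AtMost abs_mult)
qed

lemma L1_mult_nrm:
  assumes "L1 a" "L1 b"
  shows "L1 (a * b)" "nrm (a * b) \<le> nrm a * nrm b"
proof -
  have s: "(\<lambda>n. \<Sum>i\<le>n. \<bar>(fps_nth a i)\<bar> * \<bar>(fps_nth b (n - i))\<bar>) sums (nrm a * nrm b)"
    using Cauchy_product_sums[of "\<lambda>n. \<bar>(fps_nth a n)\<bar>" "\<lambda>n. \<bar>(fps_nth b n)\<bar>"] assms
    unfolding L1_def nrm_def by simp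
  show "L1 (a * b)" unfolding L1_def
    by (rule summable_comparison_test[OF _ sums_summable[OF s]]) (auto intro: mult_abs_le)
  then have "nrm (a * b) \<le> (\<Sum>n. \<Sum>i\<le>n. \<bar>fps_nth a i\<bar> * \<bar>fps_nth b (n - i)\<bar>)"
    unfolding nrm_def L1_def
    by (intro suminf_le sums_summable[OF s] mult_abs_le)
  then show "nrm (a * b) \<le> nrm a * nrm b" using sums_unique[OF s] by simp
qed

lemma L1_mult: "L1 a \<Longrightarrow> L1 b \<Longrightarrow> L1 (a * b)" using L1_mult_nrm by blast
lemma nrm_mult: "L1 a \<Longrightarrow> L1 b \<Longrightarrow> nrm (a * b) \<le> nrm a * nrm b" using L1_mult_nrm by blast

lemma L1_1: "L1 1"
proof -
  have "(\<lambda>n. \<bar>(fps_nth (1::real fps) n)\<bar>) = (\<lambda>n. if n = 0 then 1 else 0)" by auto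
  then show ?thesis unfolding L1_def by simp
qed

lemma L1_power: "L1 a \<Longrightarrow> L1 (a ^ n)"
  by (induction n) (auto intro: L1_1 L1_mult)

lemma L1_sum: "(\<And>i. i \<in> I \<Longrightarrow> L1 (f i)) \<Longrightarrow> L1 (sum f I)"
proof (induction I rule: infinite_finite_induct)
  case (insert x F)
  then show ?case using L1_add[of "f x" "sum f F"] by simp
qed (auto simp: L1_def)

lemma nrm_0: "nrm 0 = 0" unfolding nrm_def by simp

lemma nrm_sum: "(\<And>i. i \<in> I \<Longrightarrow> L1 (f i)) \<Longrightarrow> nrm (sum f I) \<le> (\<Sum>i\<in>I. nrm (f i))"
proof (induction I rule: infinite_finite_induct)
  case (insert x F)
  then show ?case
    using nrm_add[of "f x" "sum f F"] L1_sum[of F f] by (simp add: add_mono order_trans)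
qed (auto simp: nrm_0)

definition Pp :: "real fps \<Rightarrow> bool" where
  "Pp a \<longleftrightarrow> (\<forall>n. 0 \<le> (fps_nth a n)) \<and> (\<lambda>n. (fps_nth a n)) sums 1"

lemma Pp_L1: "Pp a \<Longrightarrow> L1 a"
  unfolding Pp_def L1_def by (auto simp: sums_iff)

lemma Pp_nrm: "Pp a \<Longrightarrow> nrm a = 1"
  unfolding Pp_def nrm_def by (auto simp: sums_iff)

lemma Pp_1: "Pp 1"
proof -
  have eq: "fps_nth (1::real fps) = (\<lambda>n. if n = 0 then 1 else 0)" by (auto simp: fun_eq_iff)
  have "(\<lambda>n. if n = 0 then 1 else 0) sums (1::real)"
    using sums_single[of 0 "\<lambda>_. 1::real"] by simp
  then show ?thesis unfolding Pp_def eq by auto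
qed

lemma Pp_mult: assumes "Pp a" "Pp b" shows "Pp (a * b)"
proof -
  have "(\<lambda>n. \<Sum>i\<le>n. (fps_nth a i) * (fps_nth b (n - i))) sums (1 * 1)"
    using Cauchy_product_sums[of "\<lambda>n. (fps_nth a n)" "\<lambda>n. (fps_nth b n)"] assms
    unfolding Pp_def by (auto simp: sums_iff)
  moreover have "fps_nth (a * b) = (\<lambda>n. \<Sum>i\<le>n. fps_nth a i * fps_nth b (n - i))"
    by (auto simp: fun_eq_iff fps_mult_nth atLeast0AtMost)
  ultimately show ?thesis using assms unfolding Pp_def
    by (auto intro!: sum_nonneg)
qed

lemma Pp_power: "Pp a \<Longrightarrow> Pp (a ^ n)"
  by (induction n) (auto intro: Pp_1 Pp_mult)

lemma Pp_le1: assumes "Pp a" shows "(fps_nth a n) \<le> 1"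
proof -
  have "sum (\<lambda>n. (fps_nth a n)) {n} \<le> (\<Sum>n. (fps_nth a n))"
    using assms unfolding Pp_def by (intro sum_le_suminf) (auto simp: sums_iff)
  then show ?thesis using assms unfolding Pp_def by (simp add: sums_iff)
qed




definition tf :: "(int \<Rightarrow> real) \<Rightarrow> real fps" where "tf F = Abs_fps (\<lambda>n. F (int n))"
definition NN :: "(int \<Rightarrow> real) \<Rightarrow> bool" where "NN F \<longleftrightarrow> (\<forall>k<0. F k = 0)"

lemma tf_nth[simp]: "fps_nth (tf F) n = F (int n)"
  unfolding tf_def by simp

lemma tf_nth_fun: "fps_nth (tf F) = (\<lambda>n. F (int n))"
  by (simp add: fun_eq_iff)

lemma conv_eq:
  assumes "NN F" "NN G"
  shows "(F \<star> G) m = (if m < 0 then 0 else (\<Sum>i\<le>nat m. F (int i) * G (m - int i)))"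
proof -
  have "(F \<star> G) m = infsum (\<lambda>k. F k * G (m - k)) {0..m}"
    unfolding conv_def
    by (rule infsum_cong_neutral) (use assms in \<open>auto simp: NN_def not_le\<close>)
  also have "\<dots> = (\<Sum>k\<in>{0..m}. F k * G (m - k))" by simp
  also have "\<dots> = (if m < 0 then 0 else (\<Sum>i\<le>nat m. F (int i) * G (m - int i)))"
  proof (cases "m < 0")
    case False
    then have "{0..m} = int ` {0..nat m}" using image_int_atLeastAtMost[of 0 "nat m"] by simp
    then show ?thesis using False by (simp add: sum.reindex atLeast0AtMost)
  qed simp
  finally show ?thesis .
qed

lemma NN_conv: assumes "NN F" "NN G" shows "NN (F \<star> G)"
  unfolding NN_def using conv_eq[OF assms] by simp

lemma tf_conv: assumes "NN F" "NN G" shows "tf (F \<star> G) = tf F * tf G"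
proof (rule fps_ext)
  fix n
  have "fps_nth (tf (F \<star> G)) n = (\<Sum>i\<le>n. F (int i) * G (int n - int i))"
    using conv_eq[OF assms, of "int n"] by simp
  also have "\<dots> = (\<Sum>i\<le>n. F (int i) * G (int (n - i)))"
    by (intro sum.cong) (auto simp: of_nat_diff)
  finally show "fps_nth (tf (F \<star> G)) n = fps_nth (tf F * tf G) n"
    by (simp add: fps_mult_nth atLeast0AtMost)
qed

lemma NN_delta0: "NN delta0" unfolding NN_def delta0_def by simp
lemma tf_delta0: "tf delta0 = 1"
  by (rule fps_ext) (simp add: delta0_def)

lemma NN_conv_pow: "NN G \<Longrightarrow> NN (conv_pow G n)"
  by (induction n) (auto intro: NN_conv NN_delta0)

lemma tf_conv_pow: "NN G \<Longrightarrow> tf (conv_pow G n) = tf G ^ n"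
  by (induction n) (auto simp: tf_delta0 tf_conv NN_conv_pow)

lemma hassum_int:
  fixes f :: "int \<Rightarrow> real"
  assumes "NN f"
  shows "(f has_sum s) UNIV \<longleftrightarrow> ((\<lambda>n. f (int n)) has_sum s) UNIV"
proof -
  have "(f has_sum s) UNIV \<longleftrightarrow> (f has_sum s) (range int)"
  proof (rule has_sum_cong_neutral)
    fix x assume "x \<in> UNIV - range int"
    then have "x < 0" by (metis DiffE nonneg_int_cases not_le rangeI)
    then show "f x = 0" using assms unfolding NN_def by auto
  qed auto
  also have "\<dots> \<longleftrightarrow> ((f \<circ> int) has_sum s) UNIV"
    by (rule has_sum_reindex) simp
  finally show ?thesis by (simp add: o_def)
qed

lemma PZ_iff: "F \<in> PZ \<longleftrightarrow> NN F \<and> Pp (tf F)"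
proof
  assume F: "F \<in> PZ"
  then have nn: "NN F" unfolding PZ_def NN_def by auto
  have "(F has_sum 1) UNIV" using F unfolding PZ_def by auto
  then have "((\<lambda>n. F (int n)) has_sum 1) UNIV" using hassum_int[OF nn] by simp
  then have "(\<lambda>n. F (int n)) sums 1" by (rule has_sum_imp_sums)
  then show "NN F \<and> Pp (tf F)" using F nn unfolding PZ_def Pp_def tf_nth_fun by auto
next
  assume a: "NN F \<and> Pp (tf F)"
  then have "(\<lambda>n. F (int n)) sums 1" "\<And>n. 0 \<le> F (int n)" unfolding Pp_def tf_nth_fun by auto
  then have "((\<lambda>n. F (int n)) has_sum 1) UNIV" by (rule sums_nonneg_imp_has_sum)
  then have hs: "(F has_sum 1) UNIV" using hassum_int a by blast
  have "0 \<le> F k \<and> F k \<le> 1" for k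
  proof (cases "k < 0")
    case True then show ?thesis using a unfolding NN_def by auto
  next
    case False
    then have "k = int (nat k)" by simp
    then show ?thesis using a Pp_le1[of "tf F" "nat k"] unfolding Pp_def
      by (metis tf_nth)
  qed
  then show "F \<in> PZ" using hs a unfolding PZ_def NN_def by auto
qed

lemma nrm_int:
  assumes "NN D" "L1 (tf D)"
  shows "(\<Sum>\<^sub>\<infinity>k\<in>UNIV. \<bar>D k\<bar>) = nrm (tf D)"
proof -
  have "(\<lambda>n. \<bar>D (int n)\<bar>) sums nrm (tf D)"
    using assms(2) unfolding L1_def nrm_def by (simp add: summable_sums)
  then have "((\<lambda>n. \<bar>D (int n)\<bar>) has_sum nrm (tf D)) UNIV" by (rule sums_nonneg_imp_has_sum) simp
  then have "((\<lambda>k. \<bar>D k\<bar>) has_sum nrm (tf D)) UNIV"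
    using hassum_int[of "\<lambda>k. \<bar>D k\<bar>"] assms(1) unfolding NN_def by simp
  then show ?thesis by (rule infsumI)
qed

lemma tf_diff: "tf (\<lambda>k. F k - G k) = tf F - tf G"
  by (rule fps_ext) simp

lemma classA_iff: "F \<in> classA \<longleftrightarrow> F \<in> PZ \<and> (\<exists>C. \<forall>n. real n * nrm (tf F ^ n - tf F ^ Suc n) \<le> C)"
proof -
  have eq: "(\<Sum>\<^sub>\<infinity>k\<in>UNIV. \<bar>conv_pow F n k - conv_pow F (Suc n) k\<bar>) = nrm (tf F ^ n - tf F ^ Suc n)"
    if F: "F \<in> PZ" for n
  proof -
    have nn: "NN F" "Pp (tf F)" using F unfolding PZ_iff by auto
    have t: "tf (\<lambda>k. conv_pow F n k - conv_pow F (Suc n) k) = tf F ^ n - tf F ^ Suc n"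
      unfolding tf_diff tf_conv_pow[OF nn(1)] by (rule refl)
    have nnD: "NN (\<lambda>k. conv_pow F n k - conv_pow F (Suc n) k)"
      using NN_conv_pow[OF nn(1), of n] NN_conv_pow[OF nn(1), of "Suc n"] unfolding NN_def by simp
    have l1: "L1 (tf (\<lambda>k. conv_pow F n k - conv_pow F (Suc n) k))"
      unfolding t using nn by (intro L1_diff Pp_L1 Pp_power)
    have "(\<Sum>\<^sub>\<infinity>k\<in>UNIV. \<bar>conv_pow F n k - conv_pow F (Suc n) k\<bar>) = nrm (tf (\<lambda>k. conv_pow F n k - conv_pow F (Suc n) k))"
      by (rule nrm_int[OF nnD l1])
    then show ?thesis unfolding t .
  qed
  show ?thesis
  proof
    assume "F \<in> classA"
    then obtain C where F: "F \<in> PZ" and C: "\<forall>n. real n * (\<Sum>\<^sub>\<infinity>k\<in>UNIV. \<bar>conv_pow F n k - conv_pow F (Suc n) k\<bar>) \<le> C"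
      unfolding classA_def by blast
    have "\<forall>n. real n * nrm (tf F ^ n - tf F ^ Suc n) \<le> C"
      using C by (simp only: eq[OF F] simp_thms)
    then show "F \<in> PZ \<and> (\<exists>C. \<forall>n. real n * nrm (tf F ^ n - tf F ^ Suc n) \<le> C)"
      using F by blast
  next
    assume "F \<in> PZ \<and> (\<exists>C. \<forall>n. real n * nrm (tf F ^ n - tf F ^ Suc n) \<le> C)"
    then obtain C where F: "F \<in> PZ" and C: "\<forall>n. real n * nrm (tf F ^ n - tf F ^ Suc n) \<le> C" by blast
    have "\<forall>n. real n * (\<Sum>\<^sub>\<infinity>k\<in>UNIV. \<bar>conv_pow F n k - conv_pow F (Suc n) k\<bar>) \<le> C"
      using C by (simp only: eq[OF F] simp_thms)
    then show "F \<in> classA" unfolding classA_def using F by blast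
  qed
qed




lemma nrm_mult_Pp: assumes "L1 x" "Pp P" shows "nrm (x * P) \<le> nrm x"
  using nrm_mult[OF assms(1) Pp_L1[OF assms(2)]] Pp_nrm[OF assms(2)] by simp

lemma Pp_pow_L1: "Pp P \<Longrightarrow> L1 (P ^ n)"
  by (intro Pp_L1 Pp_power)

lemma Pp_D_L1: "Pp P \<Longrightarrow> L1 (P ^ n - P ^ Suc n)"
  by (intro L1_diff Pp_pow_L1)

lemma D_bound:
  assumes P: "Pp P" and C: "\<forall>n. real n * nrm (P ^ n - P ^ Suc n) \<le> C"
  shows "real (Suc j) * nrm (P ^ j - P ^ Suc j) \<le> C + 2"
proof -
  have "nrm (P ^ j - P ^ Suc j) \<le> nrm (P ^ j) + nrm (P ^ Suc j)"
    using P by (intro nrm_diff Pp_L1 Pp_power)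
  also have "\<dots> = 2" using P by (simp add: Pp_nrm Pp_power del: power_Suc)
  finally have "nrm (P ^ j - P ^ Suc j) \<le> 2" .
  moreover have "real j * nrm (P ^ j - P ^ Suc j) \<le> C" using C by blast
  ultimately show ?thesis by (simp add: algebra_simps)
qed

lemma conv_bound:
  assumes A: "Pp A" and B: "Pp B"
    and C1: "\<forall>n. real n * nrm (A ^ n - A ^ Suc n) \<le> C1"
    and C2: "\<forall>n. real n * nrm (B ^ n - B ^ Suc n) \<le> C2"
  shows "real n * nrm ((A * B) ^ n - (A * B) ^ Suc n) \<le> C1 + C2"
proof -
  have eq: "(A * B) ^ n - (A * B) ^ Suc n = (A ^ n - A ^ Suc n) * B ^ n + (B ^ n - B ^ Suc n) * A ^ Suc n"
    by (simp add: power_mult_distrib algebra_simps)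
  have L: "L1 (A ^ n - A ^ Suc n)" "L1 (B ^ n - B ^ Suc n)"
    using A B by (auto simp only: Pp_D_L1)
  have "nrm ((A * B) ^ n - (A * B) ^ Suc n) \<le> nrm ((A ^ n - A ^ Suc n) * B ^ n) + nrm ((B ^ n - B ^ Suc n) * A ^ Suc n)"
    unfolding eq using L A B by (intro nrm_add L1_mult Pp_pow_L1)
  also have "\<dots> \<le> nrm (A ^ n - A ^ Suc n) + nrm (B ^ n - B ^ Suc n)"
    using L A B by (intro add_mono nrm_mult_Pp Pp_power)
  finally have "real n * nrm ((A * B) ^ n - (A * B) ^ Suc n) \<le> real n * nrm (A ^ n - A ^ Suc n) + real n * nrm (B ^ n - B ^ Suc n)"
    by (simp add: mult_left_mono distrib_left[symmetric])
  also have "\<dots> \<le> C1 + C2" using C1 C2 by (intro add_mono) blast+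
  finally show ?thesis .
qed

lemma binom_bound:
  fixes s u :: real
  assumes "0 \<le> s" "0 \<le> u" "s + u = 1"
  shows "s * (\<Sum>j\<le>n. real (n choose j) * s ^ j * u ^ (n - j) / real (Suc j)) \<le> 1 / real (Suc n)"
proof -
  define f where "f i = real (Suc n choose i) * s ^ i * u ^ (Suc n - i)" for i
  have t: "s * (real (n choose j) * s ^ j * u ^ (n - j) / real (Suc j)) = f (Suc j) / real (Suc n)" for j
  proof -
    have "Suc j * (Suc n choose Suc j) = Suc n * (n choose j)"
      using binomial_absorption[of j "Suc n"] by simp
    then have "real (Suc j) * real (Suc n choose Suc j) = real (Suc n) * real (n choose j)"
      by (metis of_nat_mult)
    then have b: "real (Suc n choose Suc j) = real (Suc n) * real (n choose j) / real (Suc j)"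
      by (simp add: field_simps)
    show ?thesis unfolding f_def b by (simp add: field_simps del: of_nat_Suc)
  qed
  have "s * (\<Sum>j\<le>n. real (n choose j) * s ^ j * u ^ (n - j) / real (Suc j)) = (\<Sum>j\<le>n. f (Suc j)) / real (Suc n)"
    unfolding sum_distrib_left sum_divide_distrib by (intro sum.cong refl t)
  also have "(\<Sum>j\<le>n. f (Suc j)) = (\<Sum>i\<le>Suc n. f i) - f 0"
    by (simp only: sum.atMost_Suc_shift[of f n])
  also have "(\<Sum>i\<le>Suc n. f i) = (s + u) ^ Suc n"
    unfolding f_def binomial_ring by simp
  also have "f 0 \<ge> 0" unfolding f_def using assms by simp
  then have "((s + u) ^ Suc n - f 0) / real (Suc n) \<le> 1 / real (Suc n)"
    using assms by (intro divide_right_mono) auto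
  finally show ?thesis .
qed

lemma Pp_convex:
  assumes A: "Pp A" and B: "Pp B" and t: "0 \<le> t" "t \<le> 1"
  shows "Pp (fps_const t * A + fps_const (1 - t) * B)"
proof -
  have eq: "fps_nth (fps_const t * A + fps_const (1 - t) * B) = (\<lambda>n. t * fps_nth A n + (1 - t) * fps_nth B n)"
    by (simp add: fun_eq_iff)
  have "(\<lambda>n. t * fps_nth A n + (1 - t) * fps_nth B n) sums (t * 1 + (1 - t) * 1)"
    using A B unfolding Pp_def by (intro sums_add sums_mult) auto
  then show ?thesis using A B t unfolding Pp_def eq by auto
qed

lemma half_bound:
  assumes A: "Pp A" and B: "Pp B" and s: "0 \<le> s" "0 \<le> u" "s + u = 1"
    and K: "\<forall>j. real (Suc j) * nrm (A ^ j - A ^ Suc j) \<le> K"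
  shows "s * nrm ((1 - A) * (fps_const s * A + fps_const u * B) ^ n) \<le> K / real (Suc n)"
proof -
  define c where "c j = real (n choose j) * s ^ j * u ^ (n - j)" for j
  have c0: "0 \<le> c j" for j unfolding c_def using s by simp
  have K0: "0 \<le> K" using K[rule_format, of 0] nrm_nonneg[OF Pp_D_L1[OF A, of 0]] by simp
  have exp: "(1 - A) * (fps_const s * A + fps_const u * B) ^ n = (\<Sum>j\<le>n. fps_const (c j) * ((A ^ j - A ^ Suc j) * B ^ (n - j)))"
    unfolding binomial_ring sum_distrib_left c_def
    by (intro sum.cong refl) (simp add: power_mult_distrib fps_of_nat[symmetric] algebra_simps)
  have LD: "L1 ((A ^ j - A ^ Suc j) * B ^ (n - j))" for j
    using A B by (intro L1_mult Pp_D_L1 Pp_pow_L1)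
  have "nrm ((1 - A) * (fps_const s * A + fps_const u * B) ^ n) \<le> (\<Sum>j\<le>n. nrm (fps_const (c j) * ((A ^ j - A ^ Suc j) * B ^ (n - j))))"
    unfolding exp by (intro nrm_sum L1_cmult LD)
  also have "\<dots> = (\<Sum>j\<le>n. c j * nrm ((A ^ j - A ^ Suc j) * B ^ (n - j)))"
    by (intro sum.cong refl) (simp only: nrm_cmult[OF LD] abs_of_nonneg[OF c0])
  also have "\<dots> \<le> (\<Sum>j\<le>n. c j * (K / real (Suc j)))"
  proof (intro sum_mono mult_left_mono c0)
    fix j
    have "nrm ((A ^ j - A ^ Suc j) * B ^ (n - j)) \<le> nrm (A ^ j - A ^ Suc j)"
      using A B by (intro nrm_mult_Pp Pp_D_L1 Pp_power)
    also have "\<dots> \<le> K / real (Suc j)"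
      using K[rule_format, of j] by (simp add: field_simps del: of_nat_Suc)
    finally show "nrm ((A ^ j - A ^ Suc j) * B ^ (n - j)) \<le> K / real (Suc j)" .
  qed
  finally have "s * nrm ((1 - A) * (fps_const s * A + fps_const u * B) ^ n) \<le> s * (\<Sum>j\<le>n. c j * (K / real (Suc j)))"
    using s by (intro mult_left_mono) auto
  also have "\<dots> = K * (s * (\<Sum>j\<le>n. real (n choose j) * s ^ j * u ^ (n - j) / real (Suc j)))"
    unfolding c_def sum_distrib_left by (intro sum.cong refl) (simp add: field_simps)
  also have "\<dots> \<le> K * (1 / real (Suc n))"
    using binom_bound[OF s, of n] K0 by (intro mult_left_mono) auto
  finally show ?thesis by simp
qed

lemma ring_conv_eq:
  fixes a b c d :: "'a::comm_ring_1"
  assumes "a + b = 1"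
  shows "(a * A + b * B) ^ n - (a * A + b * B) ^ Suc n = a * ((1 - A) * (a * A + b * B) ^ n) + b * ((1 - B) * (a * A + b * B) ^ n)"
proof -
  have b: "b = 1 - a" using assms by (simp add: algebra_simps)
  show ?thesis unfolding b by (simp add: algebra_simps)
qed

lemma convex_bound:
  assumes A: "Pp A" and B: "Pp B" and t: "0 \<le> t" "t \<le> 1"
    and C1: "\<forall>n. real n * nrm (A ^ n - A ^ Suc n) \<le> C1"
    and C2: "\<forall>n. real n * nrm (B ^ n - B ^ Suc n) \<le> C2"
  defines "X \<equiv> fps_const t * A + fps_const (1 - t) * B"
  shows "real n * nrm (X ^ n - X ^ Suc n) \<le> (C1 + 2) + (C2 + 2)"
proof -
  have K1: "\<forall>j. real (Suc j) * nrm (A ^ j - A ^ Suc j) \<le> C1 + 2" using D_bound[OF A C1] by blast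
  have K2: "\<forall>j. real (Suc j) * nrm (B ^ j - B ^ Suc j) \<le> C2 + 2" using D_bound[OF B C2] by blast
  have K10: "0 \<le> C1 + 2" using K1[rule_format, of 0] nrm_nonneg[OF Pp_D_L1[OF A, of 0]] by simp
  have K20: "0 \<le> C2 + 2" using K2[rule_format, of 0] nrm_nonneg[OF Pp_D_L1[OF B, of 0]] by simp
  have PX: "Pp X" unfolding X_def using A B t by (rule Pp_convex)
  have X': "X = fps_const (1 - t) * B + fps_const (1 - (1 - t)) * A" unfolding X_def by simp
  have one: "fps_const t + fps_const (1 - t) = (1 :: real fps)" by simp
  have eq: "X ^ n - X ^ Suc n = fps_const t * ((1 - A) * X ^ n) + fps_const (1 - t) * ((1 - B) * X ^ n)"
    unfolding X_def by (rule ring_conv_eq) simp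
  have LA: "L1 ((1 - A) * X ^ n)" using A PX by (intro L1_mult L1_diff L1_1 Pp_L1 Pp_pow_L1)
  have LB: "L1 ((1 - B) * X ^ n)" using B PX by (intro L1_mult L1_diff L1_1 Pp_L1 Pp_pow_L1)
  have h1: "t * nrm ((1 - A) * X ^ n) \<le> (C1 + 2) / real (Suc n)"
    unfolding X_def using half_bound[OF A B t(1) _ _ K1, of "1 - t" n] t by simp
  have h2: "(1 - t) * nrm ((1 - B) * X ^ n) \<le> (C2 + 2) / real (Suc n)"
    unfolding X' using half_bound[OF B A _ _ _ K2, of "1 - t" "1 - (1 - t)" n] t by simp
  have "nrm (X ^ n - X ^ Suc n) \<le> nrm (fps_const t * ((1 - A) * X ^ n)) + nrm (fps_const (1 - t) * ((1 - B) * X ^ n))"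
    unfolding eq using LA LB by (intro nrm_add L1_cmult)
  also have "\<dots> = t * nrm ((1 - A) * X ^ n) + (1 - t) * nrm ((1 - B) * X ^ n)"
    using t by (simp add: nrm_cmult[OF LA] nrm_cmult[OF LB])
  also have "\<dots> \<le> ((C1 + 2) + (C2 + 2)) / real (Suc n)"
    using h1 h2 by (simp add: add_divide_distrib)
  finally have "real n * nrm (X ^ n - X ^ Suc n) \<le> real n * (((C1 + 2) + (C2 + 2)) / real (Suc n))"
    by (intro mult_left_mono) auto
  also have "\<dots> \<le> (C1 + 2) + (C2 + 2)"
    using K10 K20 by (simp add: field_simps del: of_nat_Suc) (simp add: algebra_simps)
  finally show ?thesis .
qed




lemma le_one_of_sums:
  fixes f :: "nat \<Rightarrow> real"
  assumes "\<And>m. 0 \<le> f m" "f sums 1" "finite B"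
  shows "sum f B \<le> 1"
proof -
  have "sum f B \<le> suminf f" using assms by (intro sum_le_suminf) (auto simp: sums_iff)
  then show ?thesis using assms by (simp add: sums_iff)
qed

lemma swap_sums:
  fixes c :: "nat \<Rightarrow> real" and f :: "nat \<Rightarrow> nat \<Rightarrow> real"
  assumes c0: "\<And>k. 0 \<le> c k" and cs: "summable c"
    and f0: "\<And>k m. 0 \<le> f k m" and fs: "\<And>k. (\<lambda>m. f k m) sums 1"
  shows "(\<lambda>m. \<Sum>k. c k * f k m) sums (\<Sum>k. c k)"
proof -
  define h where "h = (\<lambda>(k, m). c k * f k m)"
  have h0: "0 \<le> h x" for x unfolding h_def using c0 f0 by (auto simp: case_prod_beta)
  have f1: "f k m \<le> 1" for k m
    using le_one_of_sums[of "f k" "{m}"] f0 fs by simp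
  have bd: "sum h F \<le> suminf c" if "finite F" for F
  proof -
    have "sum h F \<le> sum h (fst ` F \<times> snd ` F)"
      using that h0 by (intro sum_mono2) (auto simp: image_iff, force+)
    also have "\<dots> = (\<Sum>k\<in>fst ` F. c k * (\<Sum>m\<in>snd ` F. f k m))"
      unfolding h_def sum.cartesian_product[symmetric] by (simp add: sum_distrib_left)
    also have "\<dots> \<le> (\<Sum>k\<in>fst ` F. c k)"
      using le_one_of_sums[OF f0 fs] c0 that
      by (intro sum_mono) (simp add: mult_left_le)
    also have "\<dots> \<le> suminf c"
      using that c0 cs by (intro sum_le_suminf) auto
    finally show ?thesis .
  qed
  have "h summable_on UNIV \<times> UNIV"
    by (rule nonneg_bdd_above_summable_on) (use h0 bd in \<open>auto intro!: bdd_aboveI\<close>)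
  then obtain S where hS: "(h has_sum S) (UNIV \<times> UNIV)" by (auto simp: summable_on_def)
  have inner1: "((\<lambda>m. h (k, m)) has_sum c k) UNIV" for k
  proof -
    have "(\<lambda>m. c k * f k m) sums (c k * 1)" using fs by (intro sums_mult)
    then show ?thesis unfolding h_def using c0 f0 by (intro sums_nonneg_imp_has_sum) auto
  qed
  have "(c has_sum S) UNIV" by (rule has_sum_SigmaD[OF hS inner1])
  then have "c sums S" by (rule has_sum_imp_sums)
  then have S: "S = suminf c" by (simp add: sums_iff)
  have hS': "((\<lambda>(m, k). h (k, m)) has_sum S) (UNIV \<times> UNIV)"
    using hS has_sum_swap by blast
  have inner2: "((\<lambda>k. (\<lambda>(m, k). h (k, m)) (m, k)) has_sum (\<Sum>k. c k * f k m)) UNIV" for m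
  proof -
    have "summable (\<lambda>k. c k * f k m)"
      by (rule summable_comparison_test[OF _ cs]) (use c0 f0 f1 in \<open>auto intro!: exI[of _ 0] mult_left_le\<close>)
    then have "(\<lambda>k. c k * f k m) sums (\<Sum>k. c k * f k m)" by (rule summable_sums)
    then show ?thesis unfolding h_def using c0 f0 by (intro sums_nonneg_imp_has_sum) auto
  qed
  have "((\<lambda>m. \<Sum>k. c k * f k m) has_sum S) UNIV" by (rule has_sum_SigmaD[OF hS' inner2])
  then show ?thesis unfolding S by (rule has_sum_imp_sums)
qed

definition sub :: "real fps \<Rightarrow> real fps \<Rightarrow> real fps" where
  "sub g a = Abs_fps (\<lambda>m. \<Sum>k. fps_nth a k * fps_nth (g ^ k) m)"

lemma sub_nth: "fps_nth (sub g a) m = (\<Sum>k. fps_nth a k * fps_nth (g ^ k) m)"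
  unfolding sub_def by simp

lemma gpow_bounds: assumes "Pp g" shows "0 \<le> fps_nth (g ^ k) m" "fps_nth (g ^ k) m \<le> 1"
  using Pp_power[OF assms, of k] Pp_le1[OF Pp_power[OF assms, of k], of m] unfolding Pp_def by auto

lemma sub_summable:
  assumes g: "Pp g" and a: "L1 a"
  shows "summable (\<lambda>k. \<bar>fps_nth a k * fps_nth (g ^ k) m\<bar>)"
proof (rule summable_comparison_test[of _ "\<lambda>k. \<bar>fps_nth a k\<bar>"])
  show "summable (\<lambda>k. \<bar>fps_nth a k\<bar>)" using a unfolding L1_def .
  show "\<exists>N. \<forall>n\<ge>N. norm \<bar>fps_nth a n * fps_nth (g ^ n) m\<bar> \<le> \<bar>fps_nth a n\<bar>"
    using gpow_bounds[OF g] by (intro exI[of _ 0]) (auto simp: abs_mult intro: mult_left_le)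
qed

lemma sub_L1_nrm:
  assumes g: "Pp g" and a: "L1 a"
  shows "L1 (sub g a)" "nrm (sub g a) \<le> nrm a"
proof -
  have e: "(\<lambda>m. \<Sum>k. \<bar>fps_nth a k\<bar> * fps_nth (g ^ k) m) sums (\<Sum>k. \<bar>fps_nth a k\<bar>)"
    using a gpow_bounds[OF g] Pp_power[OF g] unfolding L1_def Pp_def
    by (intro swap_sums) auto
  have le: "\<bar>fps_nth (sub g a) m\<bar> \<le> (\<Sum>k. \<bar>fps_nth a k\<bar> * fps_nth (g ^ k) m)" for m
  proof -
    have "\<bar>fps_nth (sub g a) m\<bar> \<le> (\<Sum>k. \<bar>fps_nth a k * fps_nth (g ^ k) m\<bar>)"
      unfolding sub_nth by (rule summable_rabs[OF sub_summable[OF g a]])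
    also have "\<dots> = (\<Sum>k. \<bar>fps_nth a k\<bar> * fps_nth (g ^ k) m)"
      using gpow_bounds[OF g] by (simp add: abs_mult)
    finally show ?thesis .
  qed
  show L: "L1 (sub g a)" unfolding L1_def
    by (rule summable_comparison_test[OF _ sums_summable[OF e]]) (use le in \<open>auto intro!: exI[of _ 0]\<close>)
  have "nrm (sub g a) \<le> (\<Sum>m. \<Sum>k. \<bar>fps_nth a k\<bar> * fps_nth (g ^ k) m)"
    unfolding nrm_def using L unfolding L1_def by (intro suminf_le le sums_summable[OF e])
  then show "nrm (sub g a) \<le> nrm a" unfolding nrm_def using sums_unique[OF e] by simp
qed

lemma Pp_sub:
  assumes g: "Pp g" and a: "Pp a"
  shows "Pp (sub g a)"
proof -
  have e: "(\<lambda>m. \<Sum>k. fps_nth a k * fps_nth (g ^ k) m) sums (\<Sum>k. fps_nth a k)"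
    using a gpow_bounds[OF g] Pp_power[OF g] unfolding Pp_def
    by (intro swap_sums) (auto simp: sums_iff)
  moreover have "(\<Sum>k. fps_nth a k) = 1" using a unfolding Pp_def by (simp add: sums_iff)
  moreover have "0 \<le> fps_nth (sub g a) m" for m
  proof -
    have nn: "0 \<le> fps_nth a k * fps_nth (g ^ k) m" for k
      using a gpow_bounds[OF g] unfolding Pp_def by (auto intro: mult_nonneg_nonneg)
    show ?thesis unfolding sub_nth
      by (rule suminf_nonneg[OF summable_rabs_cancel[OF sub_summable[OF g Pp_L1[OF a]]] nn])
  qed
  moreover have "fps_nth (sub g a) = (\<lambda>m. \<Sum>k. fps_nth a k * fps_nth (g ^ k) m)"
    by (simp add: fun_eq_iff sub_nth)
  ultimately show ?thesis unfolding Pp_def by simp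
qed

lemma sub_diff:
  assumes g: "Pp g" and a: "L1 a" and b: "L1 b"
  shows "sub g a - sub g b = sub g (a - b)"
proof (rule fps_ext)
  fix m
  have "fps_nth (sub g a - sub g b) m = (\<Sum>k. fps_nth a k * fps_nth (g ^ k) m) - (\<Sum>k. fps_nth b k * fps_nth (g ^ k) m)"
    by (simp add: sub_nth)
  also have "\<dots> = (\<Sum>k. fps_nth a k * fps_nth (g ^ k) m - fps_nth b k * fps_nth (g ^ k) m)"
    by (rule suminf_diff[OF summable_rabs_cancel[OF sub_summable[OF g a]] summable_rabs_cancel[OF sub_summable[OF g b]]])
  also have "\<dots> = fps_nth (sub g (a - b)) m"
    by (simp add: sub_nth algebra_simps)
  finally show "fps_nth (sub g a - sub g b) m = fps_nth (sub g (a - b)) m" .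
qed

lemma sub_1: "sub g 1 = 1"
proof (rule fps_ext)
  fix m
  have "(\<Sum>k. fps_nth (1::real fps) k * fps_nth (g ^ k) m) = (\<Sum>k\<in>{0}. fps_nth (1::real fps) k * fps_nth (g ^ k) m)"
    by (rule suminf_finite) auto
  then show "fps_nth (sub g 1) m = fps_nth 1 m" by (simp add: sub_nth)
qed




lemma sub_mult:
  assumes g: "Pp g" and a: "L1 a" and b: "L1 b"
  shows "sub g a * sub g b = sub g (a * b)"
proof (rule fps_ext)
  fix m
  define G where "G k i = fps_nth (g ^ k) i" for k i
  define T where "T i j = (\<Sum>k\<le>j. (fps_nth a k * G k i) * (fps_nth b (j - k) * G (j - k) (m - i)))" for i j
  have cp: "(\<lambda>j. T i j) sums ((\<Sum>k. fps_nth a k * G k i) * (\<Sum>k. fps_nth b k * G k (m - i)))" for i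
    unfolding T_def
    using Cauchy_product_sums[of "\<lambda>k. fps_nth a k * G k i" "\<lambda>k. fps_nth b k * G k (m - i)"]
      sub_summable[OF g a, of i] sub_summable[OF g b, of "m - i"] unfolding G_def by simp
  have eq: "(\<Sum>i=0..m. T i j) = fps_nth (a * b) j * G j m" for j
  proof -
    have "(\<Sum>i=0..m. T i j) = (\<Sum>i=0..m. \<Sum>k\<le>j. fps_nth a k * fps_nth b (j - k) * (G k i * G (j - k) (m - i)))"
      unfolding T_def by (intro sum.cong refl) (simp add: algebra_simps)
    also have "\<dots> = (\<Sum>k\<le>j. \<Sum>i=0..m. fps_nth a k * fps_nth b (j - k) * (G k i * G (j - k) (m - i)))"
      by (rule sum.swap)
    also have "\<dots> = (\<Sum>k\<le>j. fps_nth a k * fps_nth b (j - k) * (\<Sum>i=0..m. G k i * G (j - k) (m - i)))"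
      by (simp add: sum_distrib_left)
    also have "\<dots> = (\<Sum>k\<le>j. fps_nth a k * fps_nth b (j - k) * G j m)"
    proof (rule sum.cong[OF refl])
      fix k assume "k \<in> {..j}"
      then have "g ^ j = g ^ k * g ^ (j - k)" by (simp add: power_add[symmetric])
      then have "G j m = (\<Sum>i=0..m. G k i * G (j - k) (m - i))" unfolding G_def by (simp add: fps_mult_nth)
      then show "fps_nth a k * fps_nth b (j - k) * (\<Sum>i=0..m. G k i * G (j - k) (m - i)) = fps_nth a k * fps_nth b (j - k) * G j m"
        by simp
    qed
    also have "\<dots> = fps_nth (a * b) j * G j m"
      by (simp add: fps_mult_nth atLeast0AtMost sum_distrib_right)
    finally show ?thesis .
  qed
  have "fps_nth (sub g a * sub g b) m = (\<Sum>i=0..m. (\<Sum>k. fps_nth a k * G k i) * (\<Sum>k. fps_nth b k * G k (m - i)))"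
    by (simp add: fps_mult_nth sub_nth G_def)
  also have "\<dots> = (\<Sum>i=0..m. \<Sum>j. T i j)"
    using cp by (simp add: sums_iff)
  also have "\<dots> = (\<Sum>j. \<Sum>i=0..m. T i j)"
    by (rule suminf_sum[symmetric]) (use cp in \<open>auto simp: sums_iff\<close>)
  also have "\<dots> = (\<Sum>j. fps_nth (a * b) j * G j m)"
    by (simp only: eq)
  also have "\<dots> = fps_nth (sub g (a * b)) m" by (simp add: sub_nth G_def)
  finally show "fps_nth (sub g a * sub g b) m = fps_nth (sub g (a * b)) m" .
qed

lemma sub_power:
  assumes g: "Pp g" and a: "L1 a"
  shows "sub g a ^ n = sub g (a ^ n)"
proof (induction n)
  case 0 then show ?case by (simp add: sub_1)
next
  case (Suc n)
  then show ?case using sub_mult[OF g a L1_power[OF a, of n]] by simp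
qed

lemma subord_bound:
  assumes g: "Pp g" and a: "Pp a" and C: "\<forall>n. real n * nrm (a ^ n - a ^ Suc n) \<le> C"
  shows "real n * nrm (sub g a ^ n - sub g a ^ Suc n) \<le> C"
proof -
  have La: "L1 a" using a by (rule Pp_L1)
  have "sub g a ^ n - sub g a ^ Suc n = sub g (a ^ n - a ^ Suc n)"
    unfolding sub_power[OF g La] by (rule sub_diff[OF g L1_power[OF La] L1_power[OF La]])
  moreover have "nrm (sub g (a ^ n - a ^ Suc n)) \<le> nrm (a ^ n - a ^ Suc n)"
    by (rule sub_L1_nrm(2)[OF g Pp_D_L1[OF a]])
  ultimately have "real n * nrm (sub g a ^ n - sub g a ^ Suc n) \<le> real n * nrm (a ^ n - a ^ Suc n)"
    by (simp add: mult_left_mono)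
  also have "\<dots> \<le> C" using C by blast
  finally show ?thesis .
qed




lemma classA_D:
  assumes "F \<in> classA"
  obtains C where "NN F" "Pp (tf F)" "\<forall>n. real n * nrm (tf F ^ n - tf F ^ Suc n) \<le> C"
  using assms unfolding classA_iff PZ_iff by blast

lemma classA_I:
  assumes "NN F" "Pp (tf F)" "\<forall>n. real n * nrm (tf F ^ n - tf F ^ Suc n) \<le> C"
  shows "F \<in> classA"
  using assms unfolding classA_iff PZ_iff by blast

lemma part_convex:
  assumes F1: "F1 \<in> classA" and F2: "F2 \<in> classA" and t: "0 \<le> t" "t \<le> 1"
  shows "(\<lambda>k. t * F1 k + (1 - t) * F2 k) \<in> classA"
proof -
  obtain C1 where a: "NN F1" "Pp (tf F1)" "\<forall>n. real n * nrm (tf F1 ^ n - tf F1 ^ Suc n) \<le> C1"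
    using classA_D[OF F1] by blast
  obtain C2 where b: "NN F2" "Pp (tf F2)" "\<forall>n. real n * nrm (tf F2 ^ n - tf F2 ^ Suc n) \<le> C2"
    using classA_D[OF F2] by blast
  have tfe: "tf (\<lambda>k. t * F1 k + (1 - t) * F2 k) = fps_const t * tf F1 + fps_const (1 - t) * tf F2"
    by (rule fps_ext) simp
  show ?thesis
  proof (rule classA_I)
    show "NN (\<lambda>k. t * F1 k + (1 - t) * F2 k)" using a b unfolding NN_def by simp
    show "Pp (tf (\<lambda>k. t * F1 k + (1 - t) * F2 k))" unfolding tfe using a b t by (intro Pp_convex)
    show "\<forall>n. real n * nrm (tf (\<lambda>k. t * F1 k + (1 - t) * F2 k) ^ n - tf (\<lambda>k. t * F1 k + (1 - t) * F2 k) ^ Suc n) \<le> (C1 + 2) + (C2 + 2)"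
      unfolding tfe using convex_bound[OF a(2) b(2) t a(3) b(3)] by blast
  qed
qed

lemma part_conv:
  assumes F1: "F1 \<in> classA" and F2: "F2 \<in> classA"
  shows "F1 \<star> F2 \<in> classA"
proof -
  obtain C1 where a: "NN F1" "Pp (tf F1)" "\<forall>n. real n * nrm (tf F1 ^ n - tf F1 ^ Suc n) \<le> C1"
    using classA_D[OF F1] by blast
  obtain C2 where b: "NN F2" "Pp (tf F2)" "\<forall>n. real n * nrm (tf F2 ^ n - tf F2 ^ Suc n) \<le> C2"
    using classA_D[OF F2] by blast
  show ?thesis
  proof (rule classA_I)
    show "NN (F1 \<star> F2)" using a b by (intro NN_conv)
    show "Pp (tf (F1 \<star> F2))" unfolding tf_conv[OF a(1) b(1)] using a b by (intro Pp_mult)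
    show "\<forall>n. real n * nrm (tf (F1 \<star> F2) ^ n - tf (F1 \<star> F2) ^ Suc n) \<le> C1 + C2"
      unfolding tf_conv[OF a(1) b(1)] using conv_bound[OF a(2) b(2) a(3) b(3)] by blast
  qed
qed

lemma part_sub:
  assumes F1: "F1 \<in> classA" and G: "G \<in> PZ"
  shows "(\<lambda>m. \<Sum>\<^sub>\<infinity>k\<in>UNIV. F1 (int k) * conv_pow G k m) \<in> classA"
proof -
  obtain C where a: "NN F1" "Pp (tf F1)" "\<forall>n. real n * nrm (tf F1 ^ n - tf F1 ^ Suc n) \<le> C"
    using classA_D[OF F1] by blast
  have g: "NN G" "Pp (tf G)" using G unfolding PZ_iff by auto
  define H where "H = (\<lambda>m. \<Sum>\<^sub>\<infinity>k\<in>UNIV. F1 (int k) * conv_pow G k m)"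
  have nnH: "NN H" unfolding NN_def H_def
    using NN_conv_pow[OF g(1)] unfolding NN_def by simp
  have tfH: "tf H = sub (tf G) (tf F1)"
  proof (rule fps_ext)
    fix n
    have cp: "conv_pow G k (int n) = fps_nth (tf G ^ k) n" for k
      using tf_conv_pow[OF g(1), of k] by (metis tf_nth)
    have terms: "(\<lambda>k. F1 (int k) * conv_pow G k (int n)) = (\<lambda>k. fps_nth (tf F1) k * fps_nth (tf G ^ k) n)"
      by (simp add: fun_eq_iff cp)
    have nn: "0 \<le> fps_nth (tf F1) k * fps_nth (tf G ^ k) n" for k
      using a(2) gpow_bounds[OF g(2)] unfolding Pp_def by (auto intro: mult_nonneg_nonneg)
    have "(\<lambda>k. fps_nth (tf F1) k * fps_nth (tf G ^ k) n) sums (\<Sum>k. fps_nth (tf F1) k * fps_nth (tf G ^ k) n)"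
      by (rule summable_sums[OF summable_rabs_cancel[OF sub_summable[OF g(2) Pp_L1[OF a(2)]]]])
    then have "((\<lambda>k. fps_nth (tf F1) k * fps_nth (tf G ^ k) n) has_sum (\<Sum>k. fps_nth (tf F1) k * fps_nth (tf G ^ k) n)) UNIV"
      by (rule sums_nonneg_imp_has_sum) (rule nn)
    then have "H (int n) = (\<Sum>k. fps_nth (tf F1) k * fps_nth (tf G ^ k) n)"
      unfolding H_def terms by (rule infsumI)
    then show "fps_nth (tf H) n = fps_nth (sub (tf G) (tf F1)) n" by (simp add: sub_nth)
  qed
  have "H \<in> classA"
  proof (rule classA_I)
    show "NN H" by (rule nnH)
    show "Pp (tf H)" unfolding tfH using g(2) a(2) by (rule Pp_sub)
    show "\<forall>n. real n * nrm (tf H ^ n - tf H ^ Suc n) \<le> C"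
      unfolding tfH using subord_bound[OF g(2) a(2) a(3)] by blast
  qed
  then show ?thesis unfolding H_def .
qed

theorem proposition4p2:
  shows "classA \<subseteq> PZ
    \<and> (\<forall>F1\<in>classA. \<forall>F2\<in>classA. \<forall>t::real. 0 \<le> t \<and> t \<le> 1 \<longrightarrow>
           (\<lambda>k. t * F1 k + (1 - t) * F2 k) \<in> classA)
    \<and> (\<forall>F1\<in>classA. \<forall>F2\<in>classA. F1 \<star> F2 \<in> classA)
    \<and> (\<forall>F1\<in>classA. \<forall>G\<in>PZ.
           (\<lambda>m. \<Sum>\<^sub>\<infinity>k\<in>UNIV. F1 (int k) * conv_pow G k m) \<in> classA)"
  using part_convex part_conv part_sub by (auto simp: classA_def)


end
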